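(* Let $\chi$ be an indecomposable character on $S(2^\infty)$ with GNS triple $(\pi,\mathcal{H},\xi)$. For every nice set $A\subset X$ the weak operator limit $P^A=\mathrm{w\text{-}lim}_{m\to\infty}\pi(s^A_m)$ exists, and $P^A$ is an orthogonal projection.
   Context: Let $X=\{0,1\}^{\mathbb{N}}$, $X_n=\{0,1\}^n$, and $S(2^n)$ the group of all bijections of $X_n$, acting on $X$ by $s((x,a))=(s(x),a)$ ($x\in X_n$, $a\in X$); $S(2^\infty)=\bigcup_n S(2^n)$. A character on a group $G$ is a function $\chi$ with $\chi(g_1g_2)=\chi(g_2g_1)$, $(\chi(g_ig_j^{-1}))_{i,j}$ positive semidefinite for all finite families, and $\chi(e)=1$; it is indecomposable if it is not a nontrivial convex combination of two distinct characters. The GNS triple $(\pi,\mathcal{H},\xi)$ of $\chi$ consists of a unitary representation $\pi$ of $S(2^\infty)$ on a Hilbert space $\mathcal{H}$ and a unit cyclic vector $\xi$ with $\chi(g)=(\pi(g)\xi,\xi)$. For $C\subset X_k$, $C\times X$ denotes the set of sequences in $X$ whose first $k$ coordinates form an element of $C$. A set $A\subset X$ is nice if $A=C\times X$ for some $k\in\mathbb{N}$ and $C\subset X_k$. For such $A$ and $m>k$, $s^A_m\in S(2^\infty)$ is defined by $s^A_m(x)=x$ if $x\in A$ and $s^A_m(x)=(x_1,\dots,x_{m-1},1-x_m,x_{m+1},\dots)$ if $x\notin A$. *)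

theory Defs
  imports "HOL-Analysis.Analysis"
begin

text \<open>X = {0,1}^N is modelled as nat => bool (coordinate x_k of the paper is x (k-1),
  i.e. coordinates are 0-indexed here); X_n = {0,1}^n as bool lists of length n.\<close>

type_synonym cantor = "nat \<Rightarrow> bool"

definition Xn :: "nat \<Rightarrow> bool list set" where
  "Xn n = {xs. length xs = n}"

text \<open>s in S(2^n) acts on X by s((x,a)) = (s(x),a).\<close>
definition act_fin :: "nat \<Rightarrow> (bool list \<Rightarrow> bool list) \<Rightarrow> cantor \<Rightarrow> cantor" where
  "act_fin n s x = (let ys = s (map x [0..<n]) in (\<lambda>i. if i < n then ys ! i else x i))"

definition S2n :: "nat \<Rightarrow> (cantor \<Rightarrow> cantor) set" where
  "S2n n = {act_fin n s | s. bij_betw s (Xn n) (Xn n)}"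

definition S2inf :: "(cantor \<Rightarrow> cantor) set" where
  "S2inf = (\<Union>n. S2n n)"

text \<open>Group law: composition; identity: id; inverse: inv.\<close>

definition psd_matrix :: "nat \<Rightarrow> (nat \<Rightarrow> nat \<Rightarrow> complex) \<Rightarrow> bool" where
  "psd_matrix n M \<longleftrightarrow>
     (\<forall>i<n. \<forall>j<n. M j i = cnj (M i j)) \<and>
     (\<forall>c :: nat \<Rightarrow> complex. 0 \<le> Re (\<Sum>i<n. \<Sum>j<n. cnj (c i) * M i j * c j))"

definition is_character :: "((cantor \<Rightarrow> cantor) \<Rightarrow> complex) \<Rightarrow> bool" where
  "is_character chi \<longleftrightarrow>
     (\<forall>g1\<in>S2inf. \<forall>g2\<in>S2inf. chi (g1 \<circ> g2) = chi (g2 \<circ> g1)) \<and>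
     (\<forall>n (g :: nat \<Rightarrow> cantor \<Rightarrow> cantor). (\<forall>i<n. g i \<in> S2inf) \<longrightarrow>
         psd_matrix n (\<lambda>i j. chi (g i \<circ> inv (g j)))) \<and>
     chi id = 1"

text \<open>Characters are functions on the group S2inf, so they are compared on S2inf.\<close>
definition indecomposable_character :: "((cantor \<Rightarrow> cantor) \<Rightarrow> complex) \<Rightarrow> bool" where
  "indecomposable_character chi \<longleftrightarrow> is_character chi \<and>
     \<not> (\<exists>t::real. 0 < t \<and> t < 1 \<and> (\<exists>chi1 chi2. is_character chi1 \<and> is_character chi2 \<and>
          (\<exists>g\<in>S2inf. chi1 g \<noteq> chi2 g) \<and>
          (\<forall>g\<in>S2inf. chi g = of_real t * chi1 g + of_real (1 - t) * chi2 g)))"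

locale complex_hilbert_space = vector_space scl
  for scl :: "complex \<Rightarrow> 'h::ab_group_add \<Rightarrow> 'h" +
  fixes ip :: "'h \<Rightarrow> 'h \<Rightarrow> complex"
  assumes ip_add_left: "ip (x + y) z = ip x z + ip y z"
    and ip_scale_left: "ip (scl a x) y = a * ip x y"
    and ip_cnj_sym: "ip y x = cnj (ip x y)"
    and ip_nonneg: "0 \<le> Re (ip x x)"
    and ip_definite: "ip x x = 0 \<Longrightarrow> x = 0"
    and ip_complete: "(\<forall>e>0. \<exists>N. \<forall>m\<ge>N. \<forall>n\<ge>N. sqrt (Re (ip (u m - u n) (u m - u n))) < e)
        \<Longrightarrow> \<exists>x. (\<lambda>n. sqrt (Re (ip (u n - x) (u n - x)))) \<longlonglongrightarrow> 0"

definition hnorm :: "('h \<Rightarrow> 'h \<Rightarrow> complex) \<Rightarrow> 'h \<Rightarrow> real" where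
  "hnorm ip x = sqrt (Re (ip x x))"

definition unitary_rep ::
  "(complex \<Rightarrow> 'h::ab_group_add \<Rightarrow> 'h) \<Rightarrow> ('h \<Rightarrow> 'h \<Rightarrow> complex) \<Rightarrow> ((cantor \<Rightarrow> cantor) \<Rightarrow> 'h \<Rightarrow> 'h) \<Rightarrow> bool" where
  "unitary_rep scl ip \<pi> \<longleftrightarrow>
     (\<forall>g\<in>S2inf. Vector_Spaces.linear scl scl (\<pi> g) \<and> bij (\<pi> g) \<and>
        (\<forall>u v. ip (\<pi> g u) (\<pi> g v) = ip u v)) \<and>
     (\<forall>g\<in>S2inf. \<forall>h\<in>S2inf. \<pi> (g \<circ> h) = \<pi> g \<circ> \<pi> h)"

definition cyclic_vector ::
  "(complex \<Rightarrow> 'h::ab_group_add \<Rightarrow> 'h) \<Rightarrow> ('h \<Rightarrow> 'h \<Rightarrow> complex) \<Rightarrow> ((cantor \<Rightarrow> cantor) \<Rightarrow> 'h \<Rightarrow> 'h) \<Rightarrow> 'h \<Rightarrow> bool" where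
  "cyclic_vector scl ip \<pi> \<xi> \<longleftrightarrow>
     (\<forall>v. \<forall>e>0. \<exists>w\<in>module.span scl ((\<lambda>g. \<pi> g \<xi>) ` S2inf). hnorm ip (v - w) < e)"

definition GNS_triple ::
  "((cantor \<Rightarrow> cantor) \<Rightarrow> complex) \<Rightarrow> (complex \<Rightarrow> 'h::ab_group_add \<Rightarrow> 'h) \<Rightarrow> ('h \<Rightarrow> 'h \<Rightarrow> complex)
     \<Rightarrow> ((cantor \<Rightarrow> cantor) \<Rightarrow> 'h \<Rightarrow> 'h) \<Rightarrow> 'h \<Rightarrow> bool" where
  "GNS_triple chi scl ip \<pi> \<xi> \<longleftrightarrow>
     complex_hilbert_space scl ip \<and> unitary_rep scl ip \<pi> \<and>
     hnorm ip \<xi> = 1 \<and> cyclic_vector scl ip \<pi> \<xi> \<and>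
     (\<forall>g\<in>S2inf. chi g = ip (\<pi> g \<xi>) \<xi>)"

definition nice :: "cantor set \<Rightarrow> bool" where
  "nice A \<longleftrightarrow> (\<exists>k C. C \<subseteq> Xn k \<and> A = {x. map x [0..<k] \<in> C})"

text \<open>s^A_m flips the paper's coordinate x_m, which is x (m-1) here.\<close>
definition sA :: "cantor set \<Rightarrow> nat \<Rightarrow> cantor \<Rightarrow> cantor" where
  "sA A m x = (if x \<in> A then x else x((m - 1) := \<not> x (m - 1)))"

definition weak_op_limit ::
  "('h \<Rightarrow> 'h \<Rightarrow> complex) \<Rightarrow> (nat \<Rightarrow> 'h \<Rightarrow> 'h) \<Rightarrow> ('h \<Rightarrow> 'h) \<Rightarrow> bool" where
  "weak_op_limit ip T P \<longleftrightarrow> (\<forall>u v. (\<lambda>m. ip (T m u) v) \<longlonglongrightarrow> ip (P u) v)"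

definition orth_projection ::
  "(complex \<Rightarrow> 'h::ab_group_add \<Rightarrow> 'h) \<Rightarrow> ('h \<Rightarrow> 'h \<Rightarrow> complex) \<Rightarrow> ('h \<Rightarrow> 'h) \<Rightarrow> bool" where
  "orth_projection scl ip P \<longleftrightarrow> Vector_Spaces.linear scl scl P \<and> P \<circ> P = P \<and>
     (\<forall>u v. ip (P u) v = ip u (P v))"

end

theory Submission
  imports Defs
begin


definition fin_perm :: "nat \<Rightarrow> (cantor \<Rightarrow> cantor) \<Rightarrow> bool" where
  "fin_perm n g \<longleftrightarrow> bij g \<and> (\<forall>x i. n \<le> i \<longrightarrow> g x i = x i) \<and>
     (\<forall>x y. (\<forall>i<n. x i = y i) \<longrightarrow> (\<forall>i<n. g x i = g y i))"

definition extb :: "bool list \<Rightarrow> cantor" where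
  "extb xs = (\<lambda>i. if i < length xs then xs ! i else False)"

lemma act_fin_low: "length (s (map x [0..<n])) = n \<Longrightarrow> i < n \<Longrightarrow> act_fin n s x i = s (map x [0..<n]) ! i"
  by (simp add: act_fin_def Let_def)
lemma act_fin_high: "\<not> i < n \<Longrightarrow> act_fin n s x i = x i"
  by (simp add: act_fin_def Let_def)

lemma map_act_fin: assumes "length (s (map x [0..<n])) = n"
  shows "map (act_fin n s x) [0..<n] = s (map x [0..<n])"
  using assms by (intro nth_equalityI) (auto simp: act_fin_low)

lemma map_eq_upt: "map x [0..<n] = map y [0..<n] \<longleftrightarrow> (\<forall>i<n. x i = y i)"
  by (auto simp: list_eq_iff_nth_eq)

lemma S2n_fin_perm: assumes "g \<in> S2n n" shows "fin_perm n g"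
proof -
  obtain s where g: "g = act_fin n s" and s: "bij_betw s (Xn n) (Xn n)"
    using assms by (auto simp: S2n_def)
  have len: "length (s (map x [0..<n])) = n" for x
  proof -
    have "map x [0..<n] \<in> Xn n" by (simp add: Xn_def)
    then have "s (map x [0..<n]) \<in> Xn n" by (rule bij_betw_apply[OF s])
    then show ?thesis by (simp add: Xn_def)
  qed
  have inj: "inj g"
  proof (rule injI)
    fix x y assume "g x = g y"
    then have "map (g x) [0..<n] = map (g y) [0..<n]" by simp
    then have "s (map x [0..<n]) = s (map y [0..<n])" using g map_act_fin[where s=s and x=x and n=n, OF len[of x]] map_act_fin[where s=s and x=y and n=n, OF len[of y]] by simp
    moreover have "map x [0..<n] \<in> Xn n" "map y [0..<n] \<in> Xn n" by (auto simp: Xn_def)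
    ultimately have "map x [0..<n] = map y [0..<n]"
      using inj_onD[OF bij_betw_imp_inj_on[OF s]] by blast
    then have lo: "\<forall>i<n. x i = y i" by (simp add: map_eq_upt)
    have "x i = y i" for i
    proof (cases "i < n")
      case True then show ?thesis using lo by auto
    next
      case False then show ?thesis using \<open>g x = g y\<close> g act_fin_high[OF False, of s]
        by metis
    qed
    then show "x = y" by auto
  qed
  have surj: "surj g"
  proof -
    { fix y
      have "map y [0..<n] \<in> Xn n" by (simp add: Xn_def)
      then obtain xs where xs: "xs \<in> Xn n" "s xs = map y [0..<n]"
        using s unfolding bij_betw_def by (metis imageE)
      define x where "x = (\<lambda>i. if i < n then xs ! i else y i)"
      have mx: "map x [0..<n] = xs" using xs(1) by (intro nth_equalityI) (auto simp: x_def Xn_def)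
      have "g x = y"
      proof
        fix i show "g x i = y i"
        proof (cases "i < n")
          case True then show ?thesis using g act_fin_low[where s=s and n=n and x=x, OF len[of x] True] mx xs(2) by simp
        next
          case False then show ?thesis using g act_fin_high[OF False] by (simp add: x_def)
        qed
      qed
      then have "y \<in> range g" by auto }
    then show ?thesis by auto
  qed
  show ?thesis unfolding fin_perm_def
  proof (intro conjI allI impI)
    show "bij g" using inj surj by (simp add: bij_def)
  next
    fix x :: cantor and i assume "n \<le> i" then show "g x i = x i" using g act_fin_high by simp
  next
    fix x y :: cantor and i assume h: "\<forall>i<n. x i = y i" "i < n"
    then have "map x [0..<n] = map y [0..<n]" by (simp add: map_eq_upt)
    then show "g x i = g y i" using g act_fin_low[where s=s and n=n and x=x, OF len[of x] h(2)] act_fin_low[where s=s and n=n and x=y, OF len[of y] h(2)] by metis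
  qed
qed

lemma fin_perm_S2n: assumes "fin_perm n g" shows "g \<in> S2n n"
proof -
  have b: "bij g" and hi: "\<And>x i. n \<le> i \<Longrightarrow> g x i = x i"
   and lo: "\<And>x y i. (\<forall>i<n. x i = y i) \<Longrightarrow> i < n \<Longrightarrow> g x i = g y i"
    using assms by (auto simp: fin_perm_def)
  define s where "s = (\<lambda>xs. map (g (extb xs)) [0..<n])"
  have e: "act_fin n s = g"
  proof (intro ext)
    fix x i show "act_fin n s x i = g x i"
    proof (cases "i < n")
      case True
      have "act_fin n s x i = g (extb (map x [0..<n])) i"
        using True by (simp add: act_fin_low s_def)
      also have "\<dots> = g x i" by (rule lo) (auto simp: extb_def True)
      finally show ?thesis .
    next
      case False then show ?thesis using hi act_fin_high by simp
    qed
  qed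
  have "bij_betw s (Xn n) (Xn n)"
  proof (rule bij_betwI')
    fix xs ys assume xs: "xs \<in> Xn n" and ys: "ys \<in> Xn n"
    show "(s xs = s ys) = (xs = ys)"
    proof
      assume "s xs = s ys"
      then have l: "\<forall>i<n. g (extb xs) i = g (extb ys) i" by (simp add: s_def map_eq_upt)
      have "g (extb xs) = g (extb ys)"
      proof
        fix i show "g (extb xs) i = g (extb ys) i"
          using l xs ys hi[of i] by (cases "i < n") (auto simp: extb_def Xn_def)
      qed
      then have "extb xs = extb ys" using b by (simp add: bij_def inj_eq)
      then have "\<And>i. extb xs i = extb ys i" by simp
      show "xs = ys"
      proof (rule nth_equalityI)
        show "length xs = length ys" using xs ys by (simp add: Xn_def)
        fix i assume "i < length xs"
        then show "xs ! i = ys ! i" using \<open>\<And>i. extb xs i = extb ys i\<close>[of i] \<open>length xs = length ys\<close>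
          by (simp add: extb_def)
      qed
    qed simp
  next
    fix xs assume "xs \<in> Xn n" then show "s xs \<in> Xn n" by (simp add: s_def Xn_def)
  next
    fix ys assume ys: "ys \<in> Xn n"
    obtain x where x: "g x = extb ys" using b by (metis bij_def surj_def)
    have "s (map x [0..<n]) = ys"
    proof -
      have "s (map x [0..<n]) = map (g x) [0..<n]"
        unfolding s_def map_eq_upt
      proof (intro allI impI)
        fix i assume "i < n"
        show "g (extb (map x [0..<n])) i = g x i" by (rule lo) (auto simp: extb_def \<open>i < n\<close>)
      qed
      then show ?thesis using x ys by (auto intro!: nth_equalityI simp: Xn_def extb_def)
    qed
    then show "\<exists>xs\<in>Xn n. ys = s xs" by (force simp: Xn_def)
  qed
  then show ?thesis using e by (auto simp: S2n_def)
qed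

lemma S2inf_iff: "g \<in> S2inf \<longleftrightarrow> (\<exists>n. fin_perm n g)"
  by (auto simp: S2inf_def intro: S2n_fin_perm fin_perm_S2n)

lemma fin_perm_mono: assumes "fin_perm n g" "n \<le> n'" shows "fin_perm n' g"
proof -
  have b: "bij g" and hi: "\<And>x i. n \<le> i \<Longrightarrow> g x i = x i"
   and lo: "\<And>x y i. (\<forall>i<n. x i = y i) \<Longrightarrow> i < n \<Longrightarrow> g x i = g y i"
    using assms by (auto simp: fin_perm_def)
  have lo': "g x i = g y i" if "\<forall>i<n'. x i = y i" "i < n'" for x y i
  proof (cases "i < n")
    case True then show ?thesis using that assms(2) by (intro lo) auto
  next
    case False then show ?thesis using that hi[of i] by simp
  qed
  show ?thesis unfolding fin_perm_def using b hi assms(2) lo' by auto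
qed

lemma fin_perm_comp: "fin_perm n g \<Longrightarrow> fin_perm n h \<Longrightarrow> fin_perm n (g \<circ> h)"
  unfolding fin_perm_def by (auto intro: bij_comp)

lemma fin_perm_id: "fin_perm n id"
  by (simp add: fin_perm_def)

lemma fin_perm_inv: assumes "fin_perm n g" shows "fin_perm n (inv g)"
proof -
  have b: "bij g" and hi: "\<And>x i. n \<le> i \<Longrightarrow> g x i = x i"
   and lo: "\<And>x y i. (\<forall>i<n. x i = y i) \<Longrightarrow> i < n \<Longrightarrow> g x i = g y i"
    using assms by (auto simp: fin_perm_def)
  have gi: "g (inv g x) = x" for x using b by (simp add: bij_is_surj surj_f_inv_f)
  have hi': "inv g x i = x i" if "n \<le> i" for x i
    using hi[OF that, of "inv g x"] gi by simp
  have lo': "inv g x i = inv g y i" if h: "\<forall>i<n. x i = y i" "i < n" for x y i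
  proof -
    define z where "z = (\<lambda>i. if i < n then inv g x i else inv g y i)"
    have "g z = y"
    proof
      fix j show "g z j = y j"
      proof (cases "j < n")
        case True
        have "g z j = g (inv g x) j" by (rule lo) (auto simp: z_def True)
        then show ?thesis using gi h True by simp
      next
        case False
        then show ?thesis using hi[of j z] hi'[of j y] by (simp add: z_def)
      qed
    qed
    then have "z = inv g y" using b by (metis bij_inv_eq_iff)
    then show ?thesis using h(2) by (metis z_def)
  qed
  show ?thesis unfolding fin_perm_def
    using b hi' lo' by (auto intro: bij_imp_bij_inv)
qed

lemma S2inf_comp: "g \<in> S2inf \<Longrightarrow> h \<in> S2inf \<Longrightarrow> g \<circ> h \<in> S2inf"
proof -
  assume "g \<in> S2inf" "h \<in> S2inf"
  then obtain n m where "fin_perm n g" "fin_perm m h" unfolding S2inf_iff by blast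
  then have "fin_perm (max n m) g" "fin_perm (max n m) h" by (auto intro: fin_perm_mono)
  then show ?thesis unfolding S2inf_iff by (blast intro: fin_perm_comp)
qed
lemma S2inf_inv: "g \<in> S2inf \<Longrightarrow> inv g \<in> S2inf"
  unfolding S2inf_iff using fin_perm_inv by blast
lemma S2inf_id: "id \<in> S2inf"
  unfolding S2inf_iff using fin_perm_id by blast
lemma S2inf_bij: "g \<in> S2inf \<Longrightarrow> bij g"
  unfolding S2inf_iff fin_perm_def by blast




definition flip :: "nat \<Rightarrow> cantor \<Rightarrow> cantor" where "flip j x = x(j := \<not> x j)"
definition sw :: "nat \<Rightarrow> nat \<Rightarrow> cantor \<Rightarrow> cantor" where "sw j j' x = x(j := x j', j' := x j)"
definition rr :: "nat \<Rightarrow> nat \<Rightarrow> cantor \<Rightarrow> cantor" where "rr j j' x = (if x j then flip j' x else x)"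

definition depk :: "nat \<Rightarrow> cantor set \<Rightarrow> bool" where
  "depk k A \<longleftrightarrow> (\<forall>x y :: cantor. (\<forall>i<k. x i = y i) \<longrightarrow> (x \<in> A \<longleftrightarrow> y \<in> A))"

lemma nice_depk: assumes "nice A" shows "\<exists>k. depk k A"
proof -
  obtain k C where A: "A = {x. map x [0..<k] \<in> C}" using assms unfolding nice_def by blast
  have "depk k A" unfolding depk_def
  proof (intro allI impI)
    fix x y :: cantor assume "\<forall>i<k. x i = y i"
    then have "map x [0..<k] = map y [0..<k]" by (simp add: map_eq_upt)
    then show "x \<in> A \<longleftrightarrow> y \<in> A" by (simp only: A mem_Collect_eq)
  qed
  then show ?thesis by blast
qed

lemma sA_suc: "sA A (Suc j) x = (if x \<in> A then x else flip j x)"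
  by (simp add: sA_def flip_def)

lemma flip_flip[simp]: "flip j (flip j x) = x" by (auto simp: flip_def)
lemma flip_A: assumes "depk k A" "k \<le> j" shows "flip j x \<in> A \<longleftrightarrow> x \<in> A"
proof -
  have "\<forall>i<k. flip j x i = x i" using assms(2) by (simp add: flip_def)
  then show ?thesis using assms(1) unfolding depk_def by blast
qed

lemma inv_eq_self: "f \<circ> f = id \<Longrightarrow> inv f = f"
  by (metis comp_id inv_unique_comp)

lemma invol_bij: "f \<circ> f = id \<Longrightarrow> bij f"
  using o_bij by blast

lemma sA_invol: assumes "depk k A" "k \<le> j" shows "sA A (Suc j) \<circ> sA A (Suc j) = id"
  using flip_A[OF assms] by (auto simp: sA_suc)

lemma fin_perm_sA: assumes "depk k A" "k \<le> j" shows "fin_perm (Suc j) (sA A (Suc j))"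
  unfolding fin_perm_def
proof (intro conjI allI impI)
  show "bij (sA A (Suc j))" using invol_bij[OF sA_invol[OF assms]] .
next
  fix x i assume "Suc j \<le> i" then show "sA A (Suc j) x i = x i" by (simp add: sA_suc flip_def)
next
  fix x y :: cantor and i assume h: "\<forall>i<Suc j. x i = y i" "i < Suc j"
  then have "x \<in> A \<longleftrightarrow> y \<in> A" using assms unfolding depk_def by auto
  then show "sA A (Suc j) x i = sA A (Suc j) y i" using h by (auto simp: sA_suc flip_def)
qed

lemma sw_invol: "sw j j' \<circ> sw j j' = id"
  by (auto simp: sw_def fun_eq_iff)

lemma fin_perm_sw: "fin_perm (Suc (max j j')) (sw j j')"
  unfolding fin_perm_def using invol_bij[OF sw_invol]
  by (auto simp: sw_def)

lemma rr_invol: "j \<noteq> j' \<Longrightarrow> rr j j' \<circ> rr j j' = id"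
  by (auto simp: rr_def flip_def fun_eq_iff)

lemma fin_perm_rr: "j \<noteq> j' \<Longrightarrow> fin_perm (Suc (max j j')) (rr j j')"
  unfolding fin_perm_def using invol_bij[OF rr_invol]
  by (auto simp: rr_def flip_def)

lemma sw_comm: assumes "fin_perm n g" "n \<le> j" "n \<le> j'" shows "sw j j' \<circ> g = g \<circ> sw j j'"
proof (intro ext)
  have hi: "\<And>x i. n \<le> i \<Longrightarrow> g x i = x i"
   and lo: "\<And>x y i. (\<forall>i<n. x i = y i) \<Longrightarrow> i < n \<Longrightarrow> g x i = g y i"
    using assms by (auto simp: fin_perm_def)
  fix x i
  show "(sw j j' \<circ> g) x i = (g \<circ> sw j j') x i"
  proof (cases "i < n")
    case True
    then show ?thesis using assms(2,3) lo[of x "sw j j' x" i] by (auto simp: sw_def)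
  next
    case False then show ?thesis using assms(2,3) hi by (auto simp: sw_def)
  qed
qed

lemma rr_comm: assumes "fin_perm n g" "n \<le> j" "n \<le> j'" shows "rr j j' \<circ> g = g \<circ> rr j j'"
proof (intro ext)
  have hi: "\<And>x i. n \<le> i \<Longrightarrow> g x i = x i"
   and lo: "\<And>x y i. (\<forall>i<n. x i = y i) \<Longrightarrow> i < n \<Longrightarrow> g x i = g y i"
    using assms by (auto simp: fin_perm_def)
  fix x i
  show "(rr j j' \<circ> g) x i = (g \<circ> rr j j') x i"
  proof (cases "i < n")
    case True
    then show ?thesis using assms(2,3) lo[of x "flip j' x" i] hi[of j x]
      by (auto simp: rr_def flip_def)
  next
    case False then show ?thesis using assms(2,3) hi by (auto simp: rr_def flip_def)
  qed
qed

lemma sw_A: assumes "depk k A" "k \<le> j" "k \<le> j'" shows "sw j j' x \<in> A \<longleftrightarrow> x \<in> A"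
proof -
  have "\<forall>i<k. sw j j' x i = x i" using assms(2,3) by (simp add: sw_def)
  then show ?thesis using assms(1) unfolding depk_def by blast
qed

lemma rr_A: "depk k A \<Longrightarrow> k \<le> j' \<Longrightarrow> rr j j' x \<in> A \<longleftrightarrow> x \<in> A"
  unfolding rr_def using flip_A by auto

lemma sw_sw[simp]: "sw j j' (sw j j' x) = x"
  using fun_cong[OF sw_invol[of j j'], of x] by simp

lemma sw_flip: "sw j j' (flip j (sw j j' x)) = flip j' x"
  by (auto simp: sw_def flip_def fun_eq_iff)

lemma sw_conj: assumes "depk k A" "k \<le> j" "k \<le> j'"
  shows "sw j j' \<circ> sA A (Suc j) \<circ> sw j j' = sA A (Suc j')"
proof (rule ext)
  fix x
  show "(sw j j' \<circ> sA A (Suc j) \<circ> sw j j') x = sA A (Suc j') x"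
  proof (cases "x \<in> A")
    case True then show ?thesis using sw_A[OF assms, of x] by (simp add: sA_suc)
  next
    case False then show ?thesis using sw_A[OF assms, of x] by (simp add: sA_suc sw_flip)
  qed
qed

lemma rr_flip1: "j \<noteq> j' \<Longrightarrow> x j \<Longrightarrow> rr j j' (flip j (rr j j' x)) = flip j (flip j' x)"
  by (auto simp: rr_def flip_def fun_eq_iff)
lemma rr_flip2: "j \<noteq> j' \<Longrightarrow> \<not> x j \<Longrightarrow> rr j j' (flip j (rr j j' x)) = flip j (flip j' x)"
  by (auto simp: rr_def flip_def fun_eq_iff)
lemma rr_rr: "j \<noteq> j' \<Longrightarrow> rr j j' (rr j j' x) = x"
  using fun_cong[OF rr_invol[of j j'], of x] by simp

lemma rr_conj: assumes "depk k A" "k \<le> j" "k \<le> j'" "j \<noteq> j'"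
  shows "rr j j' \<circ> sA A (Suc j) \<circ> rr j j' = sA A (Suc j) \<circ> sA A (Suc j')"
proof (rule ext)
  fix x
  have a1: "rr j j' x \<in> A \<longleftrightarrow> x \<in> A" using rr_A[OF assms(1,3)] .
  have a2: "flip j' x \<in> A \<longleftrightarrow> x \<in> A" using flip_A[OF assms(1,3)] .
  show "(rr j j' \<circ> sA A (Suc j) \<circ> rr j j') x = (sA A (Suc j) \<circ> sA A (Suc j')) x"
  proof (cases "x \<in> A")
    case True then show ?thesis using a1 assms(4) by (simp add: sA_suc rr_rr)
  next
    case False
    then have "(rr j j' \<circ> sA A (Suc j) \<circ> rr j j') x = rr j j' (flip j (rr j j' x))"
      using a1 by (simp add: sA_suc)
    also have "\<dots> = flip j (flip j' x)"
    proof (cases "x j")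
      case True then show ?thesis by (rule rr_flip1[OF assms(4)])
    next
      case False then show ?thesis by (rule rr_flip2[OF assms(4)])
    qed
    also have "\<dots> = (sA A (Suc j) \<circ> sA A (Suc j')) x" using False a2 by (simp add: sA_suc)
    finally show ?thesis .
  qed
qed




context complex_hilbert_space
begin

abbreviation hn where "hn \<equiv> hnorm ip"

lemma ip_zero_left[simp]: "ip 0 z = 0"
  using ip_add_left[of 0 0 z] by simp
lemma ip_zero_right[simp]: "ip z 0 = 0"
  using ip_cnj_sym[of z 0] by simp
lemma ip_minus_left: "ip (- x) z = - ip x z"
proof -
  have "ip x z + ip (- x) z = 0" using ip_add_left[of x "- x" z] by simp
  then show ?thesis by (simp add: add_eq_0_iff)
qed
lemma ip_diff_left: "ip (x - y) z = ip x z - ip y z"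
  using ip_add_left[of x "- y" z] ip_minus_left by simp
lemma ip_add_right: "ip z (x + y) = ip z x + ip z y"
  by (metis complex_cnj_add ip_add_left ip_cnj_sym)
lemma ip_diff_right: "ip z (x - y) = ip z x - ip z y"
  by (metis complex_cnj_diff ip_diff_left ip_cnj_sym)
lemma ip_scale_right: "ip x (scl a y) = cnj a * ip x y"
  by (metis complex_cnj_mult ip_cnj_sym ip_scale_left)
lemma ip_sum_left: "ip (\<Sum>i\<in>I. f i) z = (\<Sum>i\<in>I. ip (f i) z)"
  by (induct I rule: infinite_finite_induct) (auto simp: ip_add_left)
lemma ip_sum_right: "ip z (\<Sum>i\<in>I. f i) = (\<Sum>i\<in>I. ip z (f i))"
  by (induct I rule: infinite_finite_induct) (auto simp: ip_add_right)

lemma ip_self_real: "ip x x = complex_of_real (Re (ip x x))"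
  using ip_cnj_sym[of x x] by (simp add: complex_eq_iff)

lemma hn_sq: "(hn x)\<^sup>2 = Re (ip x x)"
  using ip_nonneg[of x] by (simp add: hnorm_def)
lemma hn_nonneg: "0 \<le> hn x" using ip_nonneg[of x] by (simp add: hnorm_def)
lemma hn_zero[simp]: "hn 0 = 0" by (simp add: hnorm_def)
lemma hn_eq0: "hn x = 0 \<Longrightarrow> x = 0"
  by (metis hnorm_def ip_definite ip_self_real of_real_0 real_sqrt_eq_zero_cancel_iff ip_nonneg)
lemma ip_self_hn: "ip x x = complex_of_real ((hn x)\<^sup>2)"
  using ip_self_real hn_sq by simp

lemma hn_scale: "hn (scl a x) = cmod a * hn x"
proof -
  have "Re (ip (scl a x) (scl a x)) = (cmod a)\<^sup>2 * Re (ip x x)"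
    apply (simp add: ip_scale_left ip_scale_right mult.assoc[symmetric])
    apply (subst ip_self_real) by (simp add: complex_mult_cnj cmod_def power2_eq_square)
  then show ?thesis unfolding hnorm_def by (simp add: real_sqrt_mult)
qed

lemma hn_minus: "hn (- x) = hn x"
  using hn_scale[of "-1" x] by simp
lemma hn_diff_commute: "hn (x - y) = hn (y - x)"
  by (metis hn_minus minus_diff_eq)

lemma cauchy_schwarz: "cmod (ip x y) \<le> hn x * hn y"
proof (cases "y = 0")
  case True then show ?thesis by (simp add: hn_nonneg)
next
  case False
  define b where "b = Re (ip y y)"
  have bpos: "b > 0" using False ip_nonneg[of y] ip_definite[of y] ip_self_real[of y]
    unfolding b_def by (metis less_eq_real_def of_real_0)
  define t where "t = ip x y / complex_of_real b"
  define q where "q = (cmod (ip x y))\<^sup>2"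
  have w: "ip x y * cnj (ip x y) = complex_of_real q" unfolding q_def by (rule complex_norm_square[symmetric])
  have w2: "cnj (ip x y) * ip x y = complex_of_real q" using w by (simp add: mult.commute)
  have "0 \<le> Re (ip (x - scl t y) (x - scl t y))" by (rule ip_nonneg)
  also have "ip (x - scl t y) (x - scl t y) = ip x x - cnj t * ip x y - t * ip y x + t * cnj t * ip y y"
    by (simp add: ip_diff_left ip_diff_right ip_scale_left ip_scale_right algebra_simps)
  also have "ip y x = cnj (ip x y)" by (rule ip_cnj_sym)
  also have "ip y y = complex_of_real b" unfolding b_def by (rule ip_self_real)
  finally have "0 \<le> Re (ip x x - cnj t * ip x y - t * cnj (ip x y) + t * cnj t * complex_of_real b)" .
  also have "cnj t * ip x y = complex_of_real (q / b)"
    using w2 by (simp add: t_def)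
  also have "t * cnj (ip x y) = complex_of_real (q / b)"
    using w by (simp add: t_def)
  also have "t * cnj t * complex_of_real b = complex_of_real (q / b)"
  proof -
    have "t * cnj t * complex_of_real b = (ip x y * cnj (ip x y)) / complex_of_real b"
      using bpos by (simp add: t_def field_simps)
    then show ?thesis using w by simp
  qed
  finally have "q / b \<le> Re (ip x x)" by simp
  then have "(cmod (ip x y))\<^sup>2 / b \<le> Re (ip x x)" by (simp add: q_def)
  then have "(cmod (ip x y))\<^sup>2 \<le> Re (ip x x) * Re (ip y y)"
    using bpos by (simp add: b_def divide_le_eq mult.commute)
  also have "\<dots> = (hn x * hn y)\<^sup>2" by (simp add: hn_sq power_mult_distrib)
  finally show ?thesis
    by (meson hn_nonneg mult_nonneg_nonneg power2_le_imp_le)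
qed

lemma hn_triangle: "hn (x + y) \<le> hn x + hn y"
proof -
  have "(hn (x + y))\<^sup>2 = Re (ip x x) + Re (ip x y) + Re (ip y x) + Re (ip y y)"
    by (simp add: hn_sq ip_add_left ip_add_right)
  also have "Re (ip y x) = Re (ip x y)" by (subst ip_cnj_sym) simp
  also have "Re (ip x y) \<le> hn x * hn y"
    by (meson order_trans complex_Re_le_cmod cauchy_schwarz)
  then have "Re (ip x x) + Re (ip x y) + Re (ip x y) + Re (ip y y) \<le> (hn x + hn y)\<^sup>2"
    by (simp add: hn_sq[symmetric] power2_sum)
  finally show ?thesis
    by (meson add_nonneg_nonneg hn_nonneg power2_le_imp_le)
qed

lemma hn_diff_triangle: "hn (x - z) \<le> hn (x - y) + hn (y - z)"
  using hn_triangle[of "x - y" "y - z"] by simp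

lemma hn_sum: "hn (\<Sum>i\<in>I. f i) \<le> (\<Sum>i\<in>I. hn (f i))"
proof (induct I rule: infinite_finite_induct)
  case (insert a F)
  then show ?case using hn_triangle[of "f a" "sum f F"] by simp
qed simp_all

lemma ip_bound: "cmod (ip x y) \<le> hn x * hn y" by (rule cauchy_schwarz)

end



locale ctx = complex_hilbert_space scl ip
  for scl :: "complex \<Rightarrow> 'h::ab_group_add \<Rightarrow> 'h" and ip +
  fixes \<pi> :: "(cantor \<Rightarrow> cantor) \<Rightarrow> 'h \<Rightarrow> 'h" and \<xi> :: 'h and chi :: "(cantor \<Rightarrow> cantor) \<Rightarrow> complex"
    and A :: "cantor set" and k :: nat
  assumes urep: "unitary_rep scl ip \<pi>"
    and cyc: "cyclic_vector scl ip \<pi> \<xi>"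
    and chi_eq: "\<And>g. g \<in> S2inf \<Longrightarrow> chi g = ip (\<pi> g \<xi>) \<xi>"
    and chi_tr: "\<And>g1 g2. g1 \<in> S2inf \<Longrightarrow> g2 \<in> S2inf \<Longrightarrow> chi (g1 \<circ> g2) = chi (g2 \<circ> g1)"
    and dep: "depk k A"
begin

lemma pi_add: "g \<in> S2inf \<Longrightarrow> \<pi> g (x + y) = \<pi> g x + \<pi> g y"
  using urep unfolding unitary_rep_def Vector_Spaces.linear_iff by blast
lemma pi_scale: "g \<in> S2inf \<Longrightarrow> \<pi> g (scl c x) = scl c (\<pi> g x)"
  using urep unfolding unitary_rep_def Vector_Spaces.linear_iff by blast
lemma pi_bij: "g \<in> S2inf \<Longrightarrow> bij (\<pi> g)"
  using urep unfolding unitary_rep_def by blast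
lemma pi_ip: "g \<in> S2inf \<Longrightarrow> ip (\<pi> g u) (\<pi> g v) = ip u v"
  using urep unfolding unitary_rep_def by blast
lemma pi_comp: "g \<in> S2inf \<Longrightarrow> h \<in> S2inf \<Longrightarrow> \<pi> (g \<circ> h) x = \<pi> g (\<pi> h x)"
  using urep unfolding unitary_rep_def by (metis comp_apply)
lemma pi_zero: "g \<in> S2inf \<Longrightarrow> \<pi> g 0 = 0"
  using pi_add[of g 0 0] by simp
lemma pi_diff: "g \<in> S2inf \<Longrightarrow> \<pi> g (x - y) = \<pi> g x - \<pi> g y"
proof -
  assume g: "g \<in> S2inf"
  have "\<pi> g (x - y) + \<pi> g y = \<pi> g x" using pi_add[OF g, of "x - y" y] by simp
  then show ?thesis by (simp add: eq_diff_eq)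
qed

lemma pi_id: "\<pi> id x = x"
proof -
  have "\<pi> id (\<pi> id x) = \<pi> id x" using pi_comp[OF S2inf_id S2inf_id, of x] by simp
  then show ?thesis using pi_bij[OF S2inf_id] by (simp add: bij_def inj_eq)
qed

lemma pi_inv: assumes "g \<in> S2inf" shows "\<pi> (inv g) (\<pi> g x) = x"
proof -
  have "inv g \<circ> g = id" using S2inf_bij[OF assms] by (simp add: bij_is_inj)
  then show ?thesis using pi_comp[OF S2inf_inv[OF assms] assms, of x] pi_id by simp
qed

lemma ip_orbit: assumes "y \<in> S2inf" "z \<in> S2inf"
  shows "ip (\<pi> y \<xi>) (\<pi> z \<xi>) = chi (inv z \<circ> y)"
proof -
  have iz: "inv z \<in> S2inf" using S2inf_inv[OF assms(2)] .
  have "ip (\<pi> y \<xi>) (\<pi> z \<xi>) = ip (\<pi> (inv z) (\<pi> y \<xi>)) (\<pi> (inv z) (\<pi> z \<xi>))"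
    using pi_ip[OF iz] by simp
  also have "\<dots> = ip (\<pi> (inv z \<circ> y) \<xi>) \<xi>" using pi_inv[OF assms(2)] pi_comp[OF iz assms(1)] by simp
  also have "\<dots> = chi (inv z \<circ> y)" using chi_eq[OF S2inf_comp[OF iz assms(1)]] by simp
  finally show ?thesis .
qed

lemma chi_conj: assumes "t \<in> S2inf" "t \<circ> t = id" "x \<in> S2inf"
  shows "chi (t \<circ> x \<circ> t) = chi x"
proof -
  have "chi (t \<circ> (x \<circ> t)) = chi ((x \<circ> t) \<circ> t)"
    using chi_tr[OF assms(1) S2inf_comp[OF assms(3,1)]] .
  also have "(x \<circ> t) \<circ> t = x" using assms(2) by (simp add: comp_assoc)
  finally show ?thesis by (simp only: comp_assoc)
qed

abbreviation U where "U m \<equiv> \<pi> (sA A m)"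

lemma sA_S2inf: "k \<le> j \<Longrightarrow> sA A (Suc j) \<in> S2inf"
  unfolding S2inf_iff using fin_perm_sA[OF dep] by blast

lemma sA_S2inf': "Suc k \<le> m \<Longrightarrow> sA A m \<in> S2inf"
  using sA_S2inf[of "m - 1"] by (metis Suc_diff_1 Suc_le_D Suc_le_mono le_Suc_eq not_less_eq_eq zero_less_Suc)

lemma sA_invol': "Suc k \<le> m \<Longrightarrow> sA A m \<circ> sA A m = id"
  using sA_invol[OF dep, of "m - 1"] by (metis Suc_diff_1 Suc_le_D Suc_le_mono le_Suc_eq not_less_eq_eq zero_less_Suc)

lemma U_invol: assumes "Suc k \<le> m" shows "U m (U m x) = x"
  using pi_comp[OF sA_S2inf'[OF assms] sA_S2inf'[OF assms], of x] sA_invol'[OF assms] pi_id by simp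

lemma U_sa: assumes "Suc k \<le> m" shows "ip (U m x) y = ip x (U m y)"
proof -
  have "ip (U m x) y = ip (U m x) (U m (U m y))" using U_invol[OF assms] by simp
  also have "\<dots> = ip x (U m y)" using pi_ip[OF sA_S2inf'[OF assms]] by simp
  finally show ?thesis .
qed

lemma hn_U: assumes "Suc k \<le> m" shows "hn (U m x) = hn x"
  using pi_ip[OF sA_S2inf'[OF assms]] by (simp add: hnorm_def)

lemma U_add: "Suc k \<le> m \<Longrightarrow> U m (x + y) = U m x + U m y"
  using pi_add[OF sA_S2inf'] by blast
lemma U_scale: "Suc k \<le> m \<Longrightarrow> U m (scl c x) = scl c (U m x)"
  using pi_scale[OF sA_S2inf'] by blast
lemma U_diff: "Suc k \<le> m \<Longrightarrow> U m (x - y) = U m x - U m y"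
  using pi_diff[OF sA_S2inf'] by blast
lemma U_zero: "Suc k \<le> m \<Longrightarrow> U m 0 = 0"
  using pi_zero[OF sA_S2inf'] by blast

lemma K1: assumes g: "fin_perm n g" and h: "fin_perm n h" and j: "max n k \<le> j" and j': "max n k \<le> j'"
  shows "ip (U (Suc j) (\<pi> g \<xi>)) (\<pi> h \<xi>) = ip (U (Suc j') (\<pi> g \<xi>)) (\<pi> h \<xi>)"
proof -
  have gS: "g \<in> S2inf" and hS: "h \<in> S2inf" using g h S2inf_iff by blast+
  have ih: "fin_perm n (inv h)" using fin_perm_inv[OF h] .
  have ihS: "inv h \<in> S2inf" using S2inf_inv[OF hS] .
  have s: "sA A (Suc j) \<in> S2inf" "sA A (Suc j') \<in> S2inf" using sA_S2inf j j' by auto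
  have tS: "sw j j' \<in> S2inf" using fin_perm_sw S2inf_iff by blast
  have c1: "sw j j' \<circ> g = g \<circ> sw j j'" using sw_comm[OF g] j j' by auto
  have c2: "sw j j' \<circ> inv h = inv h \<circ> sw j j'" using sw_comm[OF ih] j j' by auto
  have conj: "sw j j' \<circ> sA A (Suc j) \<circ> sw j j' = sA A (Suc j')" using sw_conj[OF dep] j j' by auto
  have eq: "inv h \<circ> (sA A (Suc j') \<circ> g) = sw j j' \<circ> (inv h \<circ> (sA A (Suc j) \<circ> g)) \<circ> sw j j'"
  proof -
    have "sw j j' \<circ> (inv h \<circ> (sA A (Suc j) \<circ> g)) \<circ> sw j j'
        = (sw j j' \<circ> inv h) \<circ> sA A (Suc j) \<circ> (g \<circ> sw j j')" by (simp add: comp_assoc)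
    also have "\<dots> = inv h \<circ> (sw j j' \<circ> sA A (Suc j) \<circ> sw j j') \<circ> g"
      by (simp add: c1[symmetric] c2 comp_assoc)
    also have "\<dots> = inv h \<circ> ((sw j j' \<circ> sA A (Suc j) \<circ> sw j j') \<circ> g)"
      by (simp add: comp_assoc)
    also have "\<dots> = inv h \<circ> ((sA A (Suc j')) \<circ> g)" by (simp only: conj)
    finally show ?thesis by (simp add: comp_assoc)
  qed
  have "ip (U (Suc j') (\<pi> g \<xi>)) (\<pi> h \<xi>) = chi (inv h \<circ> (sA A (Suc j') \<circ> g))"
    using ip_orbit[OF S2inf_comp[OF s(2) gS] hS] pi_comp[OF s(2) gS] by simp
  also have "\<dots> = chi (inv h \<circ> (sA A (Suc j) \<circ> g))"
    unfolding eq by (rule chi_conj[OF tS sw_invol S2inf_comp[OF ihS S2inf_comp[OF s(1) gS]]])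
  also have "\<dots> = ip (U (Suc j) (\<pi> g \<xi>)) (\<pi> h \<xi>)"
    using ip_orbit[OF S2inf_comp[OF s(1) gS] hS] pi_comp[OF s(1) gS] by simp
  finally show ?thesis by simp
qed

lemma K2: assumes g: "fin_perm n g" and h: "fin_perm n h" and j: "max n k \<le> j" and j': "max n k \<le> j'"
   and jj: "j \<noteq> j'"
  shows "ip (U (Suc j) (U (Suc j') (\<pi> g \<xi>))) (\<pi> h \<xi>) = ip (U (Suc j) (\<pi> g \<xi>)) (\<pi> h \<xi>)"
proof -
  have gS: "g \<in> S2inf" and hS: "h \<in> S2inf" using g h S2inf_iff by blast+
  have ih: "fin_perm n (inv h)" using fin_perm_inv[OF h] .
  have ihS: "inv h \<in> S2inf" using S2inf_inv[OF hS] .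
  have s: "sA A (Suc j) \<in> S2inf" "sA A (Suc j') \<in> S2inf" using sA_S2inf j j' by auto
  have tS: "rr j j' \<in> S2inf" using fin_perm_rr[OF jj] S2inf_iff by blast
  have c1: "rr j j' \<circ> g = g \<circ> rr j j'" using rr_comm[OF g] j j' by auto
  have c2: "rr j j' \<circ> inv h = inv h \<circ> rr j j'" using rr_comm[OF ih] j j' by auto
  have conj: "rr j j' \<circ> sA A (Suc j) \<circ> rr j j' = sA A (Suc j) \<circ> sA A (Suc j')"
    using rr_conj[OF dep _ _ jj] j j' by auto
  have eq: "inv h \<circ> (sA A (Suc j) \<circ> sA A (Suc j') \<circ> g) = rr j j' \<circ> (inv h \<circ> (sA A (Suc j) \<circ> g)) \<circ> rr j j'"
  proof -
    have "rr j j' \<circ> (inv h \<circ> (sA A (Suc j) \<circ> g)) \<circ> rr j j'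
        = (rr j j' \<circ> inv h) \<circ> sA A (Suc j) \<circ> (g \<circ> rr j j')" by (simp add: comp_assoc)
    also have "\<dots> = inv h \<circ> (rr j j' \<circ> sA A (Suc j) \<circ> rr j j') \<circ> g"
      by (simp add: c1[symmetric] c2 comp_assoc)
    also have "\<dots> = inv h \<circ> ((rr j j' \<circ> sA A (Suc j) \<circ> rr j j') \<circ> g)"
      by (simp add: comp_assoc)
    also have "\<dots> = inv h \<circ> ((sA A (Suc j) \<circ> sA A (Suc j')) \<circ> g)" by (simp only: conj)
    finally show ?thesis by (simp add: comp_assoc)
  qed
  have ss: "sA A (Suc j) \<circ> sA A (Suc j') \<circ> g \<in> S2inf" using S2inf_comp[OF S2inf_comp[OF s] gS] .
  have "ip (U (Suc j) (U (Suc j') (\<pi> g \<xi>))) (\<pi> h \<xi>) = chi (inv h \<circ> (sA A (Suc j) \<circ> sA A (Suc j') \<circ> g))"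
    using ip_orbit[OF ss hS] pi_comp[OF s(2) gS] pi_comp[OF S2inf_comp[OF s] gS] pi_comp[OF s(1) S2inf_comp[OF s(2) gS]]
    by (simp add: comp_assoc)
  also have "\<dots> = chi (inv h \<circ> (sA A (Suc j) \<circ> g))"
    unfolding eq by (rule chi_conj[OF tS rr_invol[OF jj] S2inf_comp[OF ihS S2inf_comp[OF s(1) gS]]])
  also have "\<dots> = ip (U (Suc j) (\<pi> g \<xi>)) (\<pi> h \<xi>)"
    using ip_orbit[OF S2inf_comp[OF s(1) gS] hS] pi_comp[OF s(1) gS] by simp
  finally show ?thesis .
qed

end



context ctx begin

definition orb where "orb = (\<lambda>g. \<pi> g \<xi>) ` S2inf"
abbreviation D where "D \<equiv> span orb"

definition Phi where "Phi e f \<longleftrightarrow> (\<exists>n0\<ge>Suc k. \<forall>a\<ge>n0. \<forall>b\<ge>n0.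
   ip (U a e) f = ip (U b e) f \<and> (a \<noteq> b \<longrightarrow> ip (U a (U b e)) f = ip (U a e) f))"

lemma Phi_orbit: assumes "g \<in> S2inf" "h \<in> S2inf" shows "Phi (\<pi> g \<xi>) (\<pi> h \<xi>)"
proof -
  obtain n1 n2 where "fin_perm n1 g" "fin_perm n2 h" using assms S2inf_iff by blast
  then have g: "fin_perm (max n1 n2) g" and h: "fin_perm (max n1 n2) h" by (auto intro: fin_perm_mono)
  define n where "n = max n1 n2"
  show ?thesis unfolding Phi_def
  proof (intro exI[of _ "Suc (max n k)"] conjI allI impI)
    show "Suc k \<le> Suc (max n k)" by simp
    fix a b assume a: "Suc (max n k) \<le> a" and b: "Suc (max n k) \<le> b"
    obtain j where j: "a = Suc j" "max n k \<le> j" using a by (metis Suc_le_D Suc_le_mono)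
    obtain j' where j': "b = Suc j'" "max n k \<le> j'" using b by (metis Suc_le_D Suc_le_mono)
    show "ip (U a (\<pi> g \<xi>)) (\<pi> h \<xi>) = ip (U b (\<pi> g \<xi>)) (\<pi> h \<xi>)"
      using K1[OF g[folded n_def] h[folded n_def] j(2) j'(2)] j j' by simp
    assume "a \<noteq> b"
    then have "j \<noteq> j'" using j j' by simp
    then show "ip (U a (U b (\<pi> g \<xi>))) (\<pi> h \<xi>) = ip (U a (\<pi> g \<xi>)) (\<pi> h \<xi>)"
      using K2[OF g[folded n_def] h[folded n_def] j(2) j'(2)] j j' by simp
  qed
qed

lemma Phi_zero_left: "Phi 0 f"
  unfolding Phi_def by (intro exI[of _ "Suc k"]) (auto simp: U_zero)

lemma Phi_zero_right: "Phi e 0"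
  unfolding Phi_def by (intro exI[of _ "Suc k"]) auto

lemma Phi_comb_left: assumes "Phi x f" "Phi y f" shows "Phi (scl c x + y) f"
proof -
  obtain n1 where n1: "n1 \<ge> Suc k" "\<forall>a\<ge>n1. \<forall>b\<ge>n1. ip (U a x) f = ip (U b x) f \<and> (a \<noteq> b \<longrightarrow> ip (U a (U b x)) f = ip (U a x) f)"
    using assms(1) unfolding Phi_def by blast
  obtain n2 where n2: "n2 \<ge> Suc k" "\<forall>a\<ge>n2. \<forall>b\<ge>n2. ip (U a y) f = ip (U b y) f \<and> (a \<noteq> b \<longrightarrow> ip (U a (U b y)) f = ip (U a y) f)"
    using assms(2) unfolding Phi_def by blast
  show ?thesis unfolding Phi_def
  proof (intro exI[of _ "max n1 n2"] conjI allI impI)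
    show "Suc k \<le> max n1 n2" using n1 by simp
    fix a b assume a: "max n1 n2 \<le> a" and b: "max n1 n2 \<le> b"
    have ka: "Suc k \<le> a" "Suc k \<le> b" using a b n1 by auto
    show "ip (U a (scl c x + y)) f = ip (U b (scl c x + y)) f"
      using n1(2)[rule_format, of a b] n2(2)[rule_format, of a b] a b ka
      by (simp add: U_add U_scale ip_add_left ip_scale_left)
    assume "a \<noteq> b"
    then show "ip (U a (U b (scl c x + y))) f = ip (U a (scl c x + y)) f"
      using n1(2)[rule_format, of a b] n2(2)[rule_format, of a b] a b ka
      by (simp add: U_add U_scale ip_add_left ip_scale_left)
  qed
qed

lemma Phi_comb_right: assumes "Phi e x" "Phi e y" shows "Phi e (scl c x + y)"
proof -
  obtain n1 where n1: "n1 \<ge> Suc k" "\<forall>a\<ge>n1. \<forall>b\<ge>n1. ip (U a e) x = ip (U b e) x \<and> (a \<noteq> b \<longrightarrow> ip (U a (U b e)) x = ip (U a e) x)"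
    using assms(1) unfolding Phi_def by blast
  obtain n2 where n2: "n2 \<ge> Suc k" "\<forall>a\<ge>n2. \<forall>b\<ge>n2. ip (U a e) y = ip (U b e) y \<and> (a \<noteq> b \<longrightarrow> ip (U a (U b e)) y = ip (U a e) y)"
    using assms(2) unfolding Phi_def by blast
  show ?thesis unfolding Phi_def
  proof (intro exI[of _ "max n1 n2"] conjI allI impI)
    show "Suc k \<le> max n1 n2" using n1 by simp
    fix a b assume a: "max n1 n2 \<le> a" and b: "max n1 n2 \<le> b"
    show "ip (U a e) (scl c x + y) = ip (U b e) (scl c x + y)"
      using n1(2)[rule_format, of a b] n2(2)[rule_format, of a b] a b
      by (simp add: ip_add_right ip_scale_right)
    assume "a \<noteq> b"
    then show "ip (U a (U b e)) (scl c x + y) = ip (U a e) (scl c x + y)"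
      using n1(2)[rule_format, of a b] n2(2)[rule_format, of a b] a b
      by (simp add: ip_add_right ip_scale_right)
  qed
qed

lemma Phi_orbD: assumes f: "f \<in> orb" and e: "e \<in> D" shows "Phi e f"
  using e
proof (induct rule: span_induct_alt)
  case base show ?case by (rule Phi_zero_left)
next
  case (step c x y)
  have "Phi x f" using step(1) f Phi_orbit unfolding orb_def by blast
  then show ?case using step(2) by (rule Phi_comb_left)
qed

lemma Phi_DD: assumes e: "e \<in> D" and f: "f \<in> D" shows "Phi e f"
  using f
proof (induct rule: span_induct_alt)
  case base show ?case by (rule Phi_zero_right)
next
  case (step c x y)
  have "Phi e x" using Phi_orbD[OF step(1) e] .
  then show ?case using step(2) by (rule Phi_comb_right)
qed

lemma dense_D: "0 < r \<Longrightarrow> \<exists>w\<in>D. hn (v - w) < r"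
  using cyc unfolding cyclic_vector_def orb_def by blast

definition II :: "nat \<Rightarrow> nat set" where "II N = {Suc N..2*N}"

lemma card_II: "card (II N) = N" by (simp add: II_def)
lemma II_ge: "m \<in> II N \<Longrightarrow> Suc N \<le> m" by (simp add: II_def)
lemma fin_II: "finite (II N)" by (simp add: II_def)

definition avg where "avg N u = scl (complex_of_real (1 / real N)) (\<Sum>m\<in>II N. U m u)"

lemma sum_U_add: "k \<le> N \<Longrightarrow> (\<Sum>m\<in>II N. U m (x + y)) = (\<Sum>m\<in>II N. U m x) + (\<Sum>m\<in>II N. U m y)"
proof -
  assume "k \<le> N"
  then have "(\<Sum>m\<in>II N. U m (x + y)) = (\<Sum>m\<in>II N. U m x + U m y)"
    by (intro sum.cong) (auto dest!: II_ge intro!: U_add)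
  then show ?thesis by (simp add: sum.distrib)
qed

lemma sum_U_scale: "k \<le> N \<Longrightarrow> (\<Sum>m\<in>II N. U m (scl c x)) = scl c (\<Sum>m\<in>II N. U m x)"
proof -
  assume "k \<le> N"
  then have "(\<Sum>m\<in>II N. U m (scl c x)) = (\<Sum>m\<in>II N. scl c (U m x))"
    by (intro sum.cong) (auto dest!: II_ge intro!: U_scale)
  then show ?thesis by (simp add: scale_sum_right)
qed

lemma avg_add: "k \<le> N \<Longrightarrow> avg N (x + y) = avg N x + avg N y"
  by (simp add: avg_def sum_U_add scale_right_distrib)

lemma avg_scale: "k \<le> N \<Longrightarrow> avg N (scl c x) = scl c (avg N x)"
  by (simp add: avg_def sum_U_scale mult.commute)

lemma avg_diff: "k \<le> N \<Longrightarrow> avg N (x - y) = avg N x - avg N y"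
proof -
  assume N: "k \<le> N"
  have "avg N (x - y) + avg N y = avg N x" using avg_add[OF N, of "x - y" y] by simp
  then show ?thesis by (simp add: eq_diff_eq)
qed

lemma hn_avg: assumes "k \<le> N" shows "hn (avg N u) \<le> hn u"
proof (cases "N = 0")
  case True then show ?thesis by (simp add: avg_def hn_nonneg)
next
  case False
  have "hn (avg N u) = (1 / real N) * hn (\<Sum>m\<in>II N. U m u)"
    by (simp add: avg_def hn_scale norm_divide)
  also have "\<dots> \<le> (1 / real N) * (\<Sum>m\<in>II N. hn (U m u))"
    by (intro mult_left_mono hn_sum) auto
  also have "(\<Sum>m\<in>II N. hn (U m u)) = (\<Sum>m\<in>II N. hn u)"
    using assms by (intro sum.cong) (auto dest!: II_ge intro!: hn_U)
  also have "(1 / real N) * \<dots> = hn u" using False by (simp add: card_II)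
  finally show ?thesis .
qed

lemma ip_avg_left: "ip (avg N u) v = complex_of_real (1 / real N) * (\<Sum>m\<in>II N. ip (U m u) v)"
  by (simp add: avg_def ip_scale_left ip_sum_left)

lemma ip_avg_right: "ip v (avg N u) = complex_of_real (1 / real N) * (\<Sum>m\<in>II N. ip v (U m u))"
  by (simp add: avg_def ip_scale_right ip_sum_right)

end



context ctx begin

lemma cfield1: "0 < n \<Longrightarrow> 0 < m \<Longrightarrow> complex_of_real (1/real n) * (complex_of_real (1/real m) * (of_nat n * (of_nat m * c) + of_nat K * (q - c))) = c + (q - c) * complex_of_real (real K / (real n * real m))"
  by (simp add: field_simps)
lemma cring2: "(c + (q - c) * complex_of_real a) - (c + (q - c) * complex_of_real b) - (c + (q - c) * complex_of_real b) + (c + (q - c) * complex_of_real d)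
   = (q - c) * complex_of_real (a + d - 2 * b)"
  by (simp add: algebra_simps)

lemma sum_ind_card: "finite S \<Longrightarrow> (\<Sum>a\<in>S. if a \<in> T then z else (0::complex)) = of_nat (card (S \<inter> T)) * z"
  by (simp add: sum.inter_restrict[symmetric])

definition kap :: "nat \<Rightarrow> nat \<Rightarrow> real" where
  "kap N M = real (card (II N \<inter> II M)) / (real N * real M)"

lemma ip_avg_avg:
  assumes H: "\<And>a b. n0 \<le> a \<Longrightarrow> n0 \<le> b \<Longrightarrow> ip (U a e) (U b e) = (if a = b then q else c)"
    and N: "n0 \<le> N" and M: "n0 \<le> M" and Np: "0 < N" and Mp: "0 < M"
  shows "ip (avg N e) (avg M e) = c + (q - c) * complex_of_real (kap N M)"
proof -
  have inner: "(\<Sum>b\<in>II M. ip (U a e) (U b e)) = of_nat M * c + (if a \<in> II M then q - c else 0)"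
    if a: "a \<in> II N" for a
  proof -
    have "(\<Sum>b\<in>II M. ip (U a e) (U b e)) = (\<Sum>b\<in>II M. c + (if a = b then q - c else 0))"
      using a N M by (intro sum.cong) (auto dest!: II_ge simp: H)
    also have "\<dots> = of_nat M * c + (if a \<in> II M then q - c else 0)"
      by (simp add: sum.distrib fin_II card_II)
    finally show ?thesis .
  qed
  have s1: "(\<Sum>a\<in>II N. of_nat M * c + (if a \<in> II M then q - c else 0)) =
      of_nat N * (of_nat M * c) + of_nat (card (II N \<inter> II M)) * (q - c)"
    by (simp add: sum.distrib fin_II card_II sum_ind_card)
  have "ip (avg N e) (avg M e) = complex_of_real (1 / real N) * (\<Sum>a\<in>II N. ip (U a e) (avg M e))"
    by (rule ip_avg_left)
  also have "\<dots> = complex_of_real (1 / real N) * (\<Sum>a\<in>II N. complex_of_real (1 / real M) *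
       (of_nat M * c + (if a \<in> II M then q - c else 0)))"
    by (intro arg_cong[where f="\<lambda>x. _ * x"] sum.cong) (simp_all add: ip_avg_right inner)
  also have "\<dots> = complex_of_real (1 / real N) * (complex_of_real (1 / real M) *
       (\<Sum>a\<in>II N. of_nat M * c + (if a \<in> II M then q - c else 0)))"
    by (simp add: sum_distrib_left)
  also have "\<dots> = complex_of_real (1 / real N) * (complex_of_real (1 / real M) *
      (of_nat N * (of_nat M * c) + of_nat (card (II N \<inter> II M)) * (q - c)))"
    unfolding s1 ..
  also have "\<dots> = c + (q - c) * complex_of_real (kap N M)"
    unfolding kap_def by (rule cfield1[OF Np Mp])
  finally show ?thesis .
qed

lemma kap_same: "0 < N \<Longrightarrow> kap N N = 1 / real N"
  by (simp add: kap_def card_II)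
lemma kap_sym: "kap N M = kap M N"
  by (simp add: kap_def Int_commute mult.commute)
lemma kap_nonneg: "0 \<le> kap N M" by (simp add: kap_def)
lemma kap_le: assumes "0 < N" "0 < M" shows "kap N M \<le> 1 / real M"
proof -
  have "card (II N \<inter> II M) \<le> card (II N)" by (intro card_mono fin_II) auto
  then have "real (card (II N \<inter> II M)) \<le> real N" by (simp add: card_II)
  then have "kap N M \<le> real N / (real N * real M)"
    unfolding kap_def using assms by (intro divide_right_mono) auto
  also have "\<dots> = 1 / real M" using assms by simp
  finally show ?thesis .
qed

lemma UU_formula: assumes e: "e \<in> D"
  shows "\<exists>n0\<ge>Suc k. \<forall>a b. n0 \<le> a \<longrightarrow> n0 \<le> b \<longrightarrow>
     ip (U a e) (U b e) = (if a = b then ip e e else ip (U n0 e) e)"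
proof -
  obtain n0 where n0: "n0 \<ge> Suc k" "\<forall>a\<ge>n0. \<forall>b\<ge>n0. ip (U a e) e = ip (U b e) e \<and> (a \<noteq> b \<longrightarrow> ip (U a (U b e)) e = ip (U a e) e)"
    using Phi_DD[OF e e] unfolding Phi_def by blast
  show ?thesis
  proof (intro exI[of _ n0] conjI allI impI)
    show "Suc k \<le> n0" by (rule n0(1))
    fix a b assume a: "n0 \<le> a" and b: "n0 \<le> b"
    have kb: "Suc k \<le> b" using n0(1) b by simp
    have "ip (U a e) (U b e) = ip (U b (U a e)) e" using U_sa[OF kb] by simp
    also have "\<dots> = (if a = b then ip e e else ip (U n0 e) e)"
    proof (cases "a = b")
      case True then show ?thesis using U_invol[OF kb] by simp
    next
      case False then show ?thesis using n0(2)[rule_format, of b a] n0(2)[rule_format, of b n0] a b by auto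
    qed
    finally show "ip (U a e) (U b e) = (if a = b then ip e e else ip (U n0 e) e)" .
  qed
qed

lemma hn_le_sq: "0 \<le> r \<Longrightarrow> (hn x)\<^sup>2 < r\<^sup>2 \<Longrightarrow> hn x < r"
  using hn_nonneg power2_less_imp_less by blast

lemma avg_cauchy_D: assumes e: "e \<in> D" and r: "0 < r"
  shows "\<exists>N0. \<forall>N\<ge>N0. \<forall>M\<ge>N0. hn (avg N e - avg M e) < r"
proof -
  obtain n0 where n0: "n0 \<ge> Suc k" and H: "\<And>a b. n0 \<le> a \<Longrightarrow> n0 \<le> b \<Longrightarrow>
     ip (U a e) (U b e) = (if a = b then ip e e else ip (U n0 e) e)"
    using UU_formula[OF e] by blast
  define q where "q = ip e e"
  define c where "c = ip (U n0 e) e"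
  define B where "B = cmod (q - c)"
  obtain L :: nat where L: "2 * B / r\<^sup>2 < real L" using reals_Archimedean2 by blast
  define N0 where "N0 = max n0 (Suc L)"
  show ?thesis
  proof (intro exI[of _ N0] allI impI)
    fix N M assume N: "N0 \<le> N" and M: "N0 \<le> M"
    have Nn: "n0 \<le> N" "n0 \<le> M" using N M by (auto simp: N0_def)
    have Np: "0 < N" "0 < M" using N M by (auto simp: N0_def)
    have HH: "\<And>a b. n0 \<le> a \<Longrightarrow> n0 \<le> b \<Longrightarrow> ip (U a e) (U b e) = (if a = b then q else c)"
      using H by (simp add: q_def c_def)
    have g1: "ip (avg N e) (avg N e) = c + (q - c) * complex_of_real (kap N N)"
      by (rule ip_avg_avg[OF HH Nn(1) Nn(1) Np(1) Np(1)])
    have g2: "ip (avg N e) (avg M e) = c + (q - c) * complex_of_real (kap N M)"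
      by (rule ip_avg_avg[OF HH Nn(1) Nn(2) Np(1) Np(2)])
    have g3: "ip (avg M e) (avg N e) = c + (q - c) * complex_of_real (kap M N)"
      by (rule ip_avg_avg[OF HH Nn(2) Nn(1) Np(2) Np(1)])
    have g4: "ip (avg M e) (avg M e) = c + (q - c) * complex_of_real (kap M M)"
      by (rule ip_avg_avg[OF HH Nn(2) Nn(2) Np(2) Np(2)])
    have kN: "k \<le> N" "k \<le> M" using Nn n0 by auto
    define t where "t = 1 / real N + 1 / real M - 2 * kap N M"
    have "ip (avg N e - avg M e) (avg N e - avg M e) =
          ip (avg N e) (avg N e) - ip (avg N e) (avg M e) - ip (avg M e) (avg N e) + ip (avg M e) (avg M e)"
      by (simp add: ip_diff_left ip_diff_right)
    also have "\<dots> = (q - c) * complex_of_real (1 / real N + 1 / real M - 2 * kap N M)"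
      unfolding g1 g2 g3 g4 kap_same[OF Np(1)] kap_same[OF Np(2)] kap_sym[of M N]
      by (rule cring2)
    finally have sq: "(hn (avg N e - avg M e))\<^sup>2 = Re ((q - c) * complex_of_real t)"
      unfolding t_def by (simp add: hn_sq)
    have t1: "t \<le> 1 / real N + 1 / real M" using kap_nonneg[of N M] by (simp add: t_def)
    have t2: "0 \<le> t" using kap_le[OF Np] kap_le[of M N] Np kap_sym[of M N] by (simp add: t_def)
    have B0: "0 \<le> B" by (simp add: B_def)
    have "Re ((q - c) * complex_of_real t) = t * Re (q - c)" by simp
    also have "\<dots> \<le> t * B" unfolding B_def using t2 by (intro mult_left_mono complex_Re_le_cmod) auto
    also have "\<dots> \<le> (1 / real N + 1 / real M) * B" using t1 B0 by (rule mult_right_mono)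
    also have "\<dots> \<le> (2 / real (Suc L)) * B"
    proof -
      have rN: "real (Suc L) \<le> real N" "real (Suc L) \<le> real M" using N M by (auto simp: N0_def)
      have "1 / real N \<le> 1 / real (Suc L)"
        by (rule divide_left_mono) (use rN in auto)
      moreover have "1 / real M \<le> 1 / real (Suc L)"
        by (rule divide_left_mono) (use rN in auto)
      ultimately have "1 / real N + 1 / real M \<le> 2 / real (Suc L)" by simp
      then show ?thesis using B0 by (rule mult_right_mono)
    qed
    also have "\<dots> < r\<^sup>2"
    proof -
      have r2: "0 < r\<^sup>2" using r by simp
      have "2 * B < real L * r\<^sup>2" using L pos_divide_less_eq[OF r2] by blast
      also have "\<dots> \<le> real (Suc L) * r\<^sup>2" using r2 by (intro mult_right_mono) auto
      finally have "2 * B < real (Suc L) * r\<^sup>2" .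
      then show ?thesis by (simp add: pos_divide_less_eq) (metis mult.commute)
    qed
    finally have X: "Re ((q - c) * complex_of_real t) < r\<^sup>2" .
    have "(hn (avg N e - avg M e))\<^sup>2 < r\<^sup>2" using X sq by linarith
    then show "hn (avg N e - avg M e) < r" using hn_le_sq r by simp
  qed
qed

lemma avg_cauchy: assumes r: "0 < r"
  shows "\<exists>N0. \<forall>N\<ge>N0. \<forall>M\<ge>N0. hn (avg N u - avg M u) < r"
proof -
  obtain e where e: "e \<in> D" "hn (u - e) < r / 3" using dense_D[of "r/3" u] r by auto
  obtain N1 where N1: "\<forall>N\<ge>N1. \<forall>M\<ge>N1. hn (avg N e - avg M e) < r / 3"
    using avg_cauchy_D[OF e(1), of "r/3"] r by auto
  show ?thesis
  proof (intro exI[of _ "max N1 k"] allI impI)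
    fix N M assume N: "max N1 k \<le> N" and M: "max N1 k \<le> M"
    have kN: "k \<le> N" "k \<le> M" using N M by auto
    have "avg N u - avg M u = avg N (u - e) + (avg N e - avg M e) + avg M (e - u)"
      using kN by (simp add: avg_diff algebra_simps)
    then have "hn (avg N u - avg M u) \<le> hn (avg N (u - e) + (avg N e - avg M e)) + hn (avg M (e - u))"
      using hn_triangle by simp
    also have "\<dots> \<le> hn (avg N (u - e)) + hn (avg N e - avg M e) + hn (avg M (e - u))"
      using hn_triangle[of "avg N (u - e)" "avg N e - avg M e"] by simp
    also have "\<dots> < r / 3 + r / 3 + r / 3"
    proof -
      have a1: "hn (avg N (u - e)) < r / 3" using hn_avg[OF kN(1), of "u - e"] e(2) by simp
      have a2: "hn (avg N e - avg M e) < r / 3" using N1 N M by simp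
      have a3: "hn (avg M (e - u)) < r / 3" using hn_avg[OF kN(2), of "e - u"] e(2) hn_diff_commute[of e u] by simp
      show ?thesis using a1 a2 a3 by simp
    qed
    finally show "hn (avg N u - avg M u) < r" by simp
  qed
qed

lemma avg_conv: "\<exists>x. (\<lambda>n. hn (avg n u - x)) \<longlonglongrightarrow> 0"
proof -
  have "\<forall>e>0. \<exists>N. \<forall>m\<ge>N. \<forall>n\<ge>N. sqrt (Re (ip (avg m u - avg n u) (avg m u - avg n u))) < e"
    using avg_cauchy unfolding hnorm_def by blast
  then have "\<exists>x. (\<lambda>n. sqrt (Re (ip (avg n u - x) (avg n u - x)))) \<longlonglongrightarrow> 0"
    by (rule ip_complete)
  then show ?thesis unfolding hnorm_def .
qed

end



lemma squeeze0: assumes "\<forall>n\<ge>N. 0 \<le> f n \<and> f n \<le> g n" "g \<longlonglongrightarrow> 0" shows "f \<longlonglongrightarrow> (0::real)"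
proof -
  have e1: "\<forall>\<^sub>F n in sequentially. (\<lambda>_. 0::real) n \<le> f n"
    unfolding eventually_sequentially using assms(1) by blast
  have e2: "\<forall>\<^sub>F n in sequentially. f n \<le> g n"
    unfolding eventually_sequentially using assms(1) by blast
  show ?thesis by (rule tendsto_sandwich[OF e1 e2 tendsto_const assms(2)])
qed

lemma conv_by_bound: fixes f :: "nat \<Rightarrow> complex"
  assumes "\<forall>n\<ge>N. cmod (f n - l) \<le> g n" "g \<longlonglongrightarrow> 0" shows "f \<longlonglongrightarrow> l"
proof -
  have b: "\<forall>n\<ge>N. 0 \<le> cmod (f n - l) \<and> cmod (f n - l) \<le> g n" using assms(1) by simp
  have "(\<lambda>n. cmod (f n - l)) \<longlonglongrightarrow> 0" by (rule squeeze0[OF b assms(2)])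
  then have "(\<lambda>n. f n - l) \<longlonglongrightarrow> 0" by (rule tendsto_norm_zero_cancel)
  then show ?thesis by (rule LIM_zero_cancel)
qed

context ctx begin

definition P where "P u = (SOME x. (\<lambda>n. hn (avg n u - x)) \<longlonglongrightarrow> 0)"

lemma P_lim: "(\<lambda>n. hn (avg n u - P u)) \<longlonglongrightarrow> 0"
  unfolding P_def using someI_ex[OF avg_conv] .

lemma lim_unique: assumes "(\<lambda>n. hn (a n - x)) \<longlonglongrightarrow> 0" "(\<lambda>n. hn (a n - y)) \<longlonglongrightarrow> 0" shows "x = y"
proof -
  have "(\<lambda>n. hn (a n - x) + hn (a n - y)) \<longlonglongrightarrow> 0" using tendsto_add_zero[OF assms] .
  moreover have "\<exists>N. \<forall>n\<ge>N. hn (x - y) \<le> hn (a n - x) + hn (a n - y)"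
  proof (intro exI[of _ 0] allI impI)
    fix n :: nat
    have "hn (x - y) \<le> hn (x - a n) + hn (a n - y)" by (rule hn_diff_triangle)
    then show "hn (x - y) \<le> hn (a n - x) + hn (a n - y)" using hn_diff_commute[of x "a n"] by simp
  qed
  ultimately have "hn (x - y) \<le> 0" by (rule LIMSEQ_le_const)
  then have "hn (x - y) = 0" using hn_nonneg[of "x - y"] by linarith
  then have "x - y = 0" by (rule hn_eq0)
  then show ?thesis by simp
qed

lemma P_add: "P (x + y) = P x + P y"
proof (rule lim_unique[OF P_lim])
  show "(\<lambda>n. hn (avg n (x + y) - (P x + P y))) \<longlonglongrightarrow> 0"
  proof (rule squeeze0[of k])
    show "(\<lambda>n. hn (avg n x - P x) + hn (avg n y - P y)) \<longlonglongrightarrow> 0"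
      using tendsto_add_zero[OF P_lim P_lim] .
    show "\<forall>n\<ge>k. 0 \<le> hn (avg n (x + y) - (P x + P y)) \<and>
       hn (avg n (x + y) - (P x + P y)) \<le> hn (avg n x - P x) + hn (avg n y - P y)"
    proof (intro allI impI conjI)
      fix n assume n: "k \<le> n"
      show "0 \<le> hn (avg n (x + y) - (P x + P y))" by (rule hn_nonneg)
      have eq: "avg n (x + y) - (P x + P y) = (avg n x - P x) + (avg n y - P y)"
        using avg_add[OF n] by (simp add: algebra_simps)
      show "hn (avg n (x + y) - (P x + P y)) \<le> hn (avg n x - P x) + hn (avg n y - P y)"
        by (subst eq) (rule hn_triangle)
    qed
  qed
qed

lemma P_scale: "P (scl c x) = scl c (P x)"
proof (rule lim_unique[OF P_lim])
  show "(\<lambda>n. hn (avg n (scl c x) - scl c (P x))) \<longlonglongrightarrow> 0"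
  proof (rule squeeze0[of k])
    show "(\<lambda>n. cmod c * hn (avg n x - P x)) \<longlonglongrightarrow> 0"
      using tendsto_mult_right_zero[OF P_lim] .
    show "\<forall>n\<ge>k. 0 \<le> hn (avg n (scl c x) - scl c (P x)) \<and>
       hn (avg n (scl c x) - scl c (P x)) \<le> cmod c * hn (avg n x - P x)"
    proof (intro allI impI conjI)
      fix n assume n: "k \<le> n"
      show "0 \<le> hn (avg n (scl c x) - scl c (P x))" by (rule hn_nonneg)
      have "avg n (scl c x) - scl c (P x) = scl c (avg n x - P x)"
        using avg_scale[OF n] by (simp add: scale_right_diff_distrib)
      then show "hn (avg n (scl c x) - scl c (P x)) \<le> cmod c * hn (avg n x - P x)"
        by (simp add: hn_scale)
    qed
  qed
qed

lemma P_diff: "P (x - y) = P x - P y"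
proof -
  have "P (x - y) + P y = P x" using P_add[of "x - y" y] by simp
  then show ?thesis by (simp add: eq_diff_eq)
qed

lemma hn_P: "hn (P u) \<le> hn u"
proof -
  have "(\<lambda>n. hn (avg n u - P u) + hn u) \<longlonglongrightarrow> 0 + hn u"
    by (intro tendsto_add P_lim tendsto_const)
  moreover have "\<forall>n\<ge>k. hn (P u) \<le> hn (avg n u - P u) + hn u"
  proof (intro allI impI)
    fix n assume n: "k \<le> n"
    have "hn (P u) \<le> hn (P u - avg n u) + hn (avg n u)"
      using hn_triangle[of "P u - avg n u" "avg n u"] by simp
    then show "hn (P u) \<le> hn (avg n u - P u) + hn u"
      using hn_avg[OF n, of u] hn_diff_commute[of "P u" "avg n u"] by linarith
  qed
  then have "\<exists>N. \<forall>n\<ge>N. hn (P u) \<le> hn (avg n u - P u) + hn u" by blast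
  ultimately have "hn (P u) \<le> 0 + hn u" by (rule LIMSEQ_le_const)
  then show ?thesis by simp
qed

lemma ip_avg_lim: "(\<lambda>n. ip (avg n u) v) \<longlonglongrightarrow> ip (P u) v"
proof (rule conv_by_bound[of 0])
  show "(\<lambda>n. hn (avg n u - P u) * hn v) \<longlonglongrightarrow> 0" using tendsto_mult_left_zero[OF P_lim] .
  show "\<forall>n\<ge>0. cmod (ip (avg n u) v - ip (P u) v) \<le> hn (avg n u - P u) * hn v"
    using cauchy_schwarz by (simp add: ip_diff_left[symmetric])
qed

lemma weak_D: assumes e: "e \<in> D" and f: "f \<in> D" shows "(\<lambda>m. ip (U m e) f) \<longlonglongrightarrow> ip (P e) f"
proof -
  obtain n0 where n0: "n0 \<ge> Suc k" "\<forall>a\<ge>n0. \<forall>b\<ge>n0. ip (U a e) f = ip (U b e) f \<and> (a \<noteq> b \<longrightarrow> ip (U a (U b e)) f = ip (U a e) f)"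
    using Phi_DD[OF e f] unfolding Phi_def by blast
  define d where "d = ip (U n0 e) f"
  have const: "ip (U m e) f = d" if "n0 \<le> m" for m
    using n0(2)[rule_format, OF that order_refl] unfolding d_def by blast
  have avgc: "ip (avg N e) f = d" if N: "n0 \<le> N" for N
  proof -
    have Np: "0 < N" using N n0 by simp
    have "ip (avg N e) f = complex_of_real (1 / real N) * (\<Sum>m\<in>II N. ip (U m e) f)" by (rule ip_avg_left)
    also have "(\<Sum>m\<in>II N. ip (U m e) f) = (\<Sum>m\<in>II N. d)"
      using N by (intro sum.cong) (auto dest!: II_ge intro!: const)
    also have "\<dots> = of_nat N * d" by (simp add: card_II)
    finally show ?thesis using Np by simp
  qed
  have ev1: "eventually (\<lambda>n. ip (avg n e) f = d) sequentially"
    unfolding eventually_sequentially using avgc by blast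
  have "(\<lambda>n. ip (avg n e) f) \<longlonglongrightarrow> d" using tendsto_eventually[OF ev1] .
  then have "ip (P e) f = d" using LIMSEQ_unique[OF ip_avg_lim[of e f]] by blast
  moreover have ev2: "eventually (\<lambda>m. ip (U m e) f = d) sequentially"
    unfolding eventually_sequentially using const by blast
  moreover have "(\<lambda>m. ip (U m e) f) \<longlonglongrightarrow> d" using tendsto_eventually[OF ev2] .
  ultimately show ?thesis by simp
qed

lemma weak_1: assumes e: "e \<in> D" shows "(\<lambda>m. ip (U m e) v) \<longlonglongrightarrow> ip (P e) v"
proof (rule LIMSEQ_I)
  fix r :: real assume r: "0 < r"
  define \<delta> where "\<delta> = r / (4 * (hn e + 1))"
  have dpos: "0 < \<delta>" using r hn_nonneg[of e] by (simp add: \<delta>_def)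
  have hd: "hn e * \<delta> \<le> r / 4"
  proof -
    have "hn e * \<delta> = r / 4 * (hn e / (hn e + 1))" by (simp add: \<delta>_def)
    also have "\<dots> \<le> r / 4 * 1" using r hn_nonneg[of e] by (intro mult_left_mono) auto
    finally show ?thesis by simp
  qed
  obtain f where f: "f \<in> D" "hn (v - f) < \<delta>" using dense_D[OF dpos] by blast
  obtain no where no: "\<forall>m\<ge>no. cmod (ip (U m e) f - ip (P e) f) < r / 4"
    using LIMSEQ_D[OF weak_D[OF e f(1)], of "r/4"] r by auto
  show "\<exists>no. \<forall>m\<ge>no. cmod (ip (U m e) v - ip (P e) v) < r"
  proof (intro exI[of _ "max no (Suc k)"] allI impI)
    fix m assume m: "max no (Suc k) \<le> m"
    have km: "Suc k \<le> m" using m by simp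
    have eq: "ip (U m e) v - ip (P e) v = ip (U m e) (v - f) + (ip (U m e) f - ip (P e) f) + ip (P e) (f - v)"
      by (simp add: ip_diff_right)
    have b1: "cmod (ip (U m e) (v - f)) \<le> hn e * \<delta>"
    proof -
      have "cmod (ip (U m e) (v - f)) \<le> hn (U m e) * hn (v - f)" by (rule cauchy_schwarz)
      also have "\<dots> \<le> hn e * \<delta>" using hn_U[OF km] f(2) hn_nonneg[of e] by (simp add: mult_left_mono)
      finally show ?thesis .
    qed
    have b3: "cmod (ip (P e) (f - v)) \<le> hn e * \<delta>"
    proof -
      have "cmod (ip (P e) (f - v)) \<le> hn (P e) * hn (f - v)" by (rule cauchy_schwarz)
      also have "\<dots> \<le> hn e * \<delta>" using hn_P[of e] f(2) hn_diff_commute[of f v] hn_nonneg[of "P e"] hn_nonneg[of "f - v"]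
        by (intro mult_mono) auto
      finally show ?thesis .
    qed
    have b2: "cmod (ip (U m e) f - ip (P e) f) < r / 4" using no m by simp
    have "cmod (ip (U m e) v - ip (P e) v) \<le> cmod (ip (U m e) (v - f)) + cmod (ip (U m e) f - ip (P e) f) + cmod (ip (P e) (f - v))"
      unfolding eq using norm_triangle_ineq[of "ip (U m e) (v - f) + (ip (U m e) f - ip (P e) f)" "ip (P e) (f - v)"]
        norm_triangle_ineq[of "ip (U m e) (v - f)" "ip (U m e) f - ip (P e) f"] by linarith
    also have "\<dots> < r" using b1 b2 b3 hd r by linarith
    finally show "cmod (ip (U m e) v - ip (P e) v) < r" .
  qed
qed

lemma weak_lim: "(\<lambda>m. ip (U m u) v) \<longlonglongrightarrow> ip (P u) v"
proof (rule LIMSEQ_I)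
  fix r :: real assume r: "0 < r"
  define \<delta> where "\<delta> = r / (4 * (hn v + 1))"
  have dpos: "0 < \<delta>" using r hn_nonneg[of v] by (simp add: \<delta>_def)
  have hd: "\<delta> * hn v \<le> r / 4"
  proof -
    have "\<delta> * hn v = r / 4 * (hn v / (hn v + 1))" by (simp add: \<delta>_def)
    also have "\<dots> \<le> r / 4 * 1" using r hn_nonneg[of v] by (intro mult_left_mono) auto
    finally show ?thesis by simp
  qed
  obtain e where e: "e \<in> D" "hn (u - e) < \<delta>" using dense_D[OF dpos] by blast
  obtain no where no: "\<forall>m\<ge>no. cmod (ip (U m e) v - ip (P e) v) < r / 4"
    using LIMSEQ_D[OF weak_1[OF e(1)], of "r/4"] r by auto
  show "\<exists>no. \<forall>m\<ge>no. cmod (ip (U m u) v - ip (P u) v) < r"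
  proof (intro exI[of _ "max no (Suc k)"] allI impI)
    fix m assume m: "max no (Suc k) \<le> m"
    have km: "Suc k \<le> m" using m by simp
    have eq: "ip (U m u) v - ip (P u) v = ip (U m (u - e)) v + (ip (U m e) v - ip (P e) v) + ip (P (e - u)) v"
      by (simp add: U_diff[OF km] P_diff ip_diff_left)
    have b1: "cmod (ip (U m (u - e)) v) \<le> \<delta> * hn v"
    proof -
      have "cmod (ip (U m (u - e)) v) \<le> hn (U m (u - e)) * hn v" by (rule cauchy_schwarz)
      also have "\<dots> \<le> \<delta> * hn v" using hn_U[OF km] e(2) hn_nonneg[of v] by (simp add: mult_right_mono)
      finally show ?thesis .
    qed
    have b3: "cmod (ip (P (e - u)) v) \<le> \<delta> * hn v"
    proof -
      have "cmod (ip (P (e - u)) v) \<le> hn (P (e - u)) * hn v" by (rule cauchy_schwarz)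
      also have "\<dots> \<le> \<delta> * hn v" using hn_P[of "e - u"] e(2) hn_diff_commute[of e u] hn_nonneg[of v]
        by (intro mult_right_mono) auto
      finally show ?thesis .
    qed
    have b2: "cmod (ip (U m e) v - ip (P e) v) < r / 4" using no m by simp
    have "cmod (ip (U m u) v - ip (P u) v) \<le> cmod (ip (U m (u - e)) v) + cmod (ip (U m e) v - ip (P e) v) + cmod (ip (P (e - u)) v)"
      unfolding eq using norm_triangle_ineq[of "ip (U m (u - e)) v + (ip (U m e) v - ip (P e) v)" "ip (P (e - u)) v"]
        norm_triangle_ineq[of "ip (U m (u - e)) v" "ip (U m e) v - ip (P e) v"] by linarith
    also have "\<dots> < r" using b1 b2 b3 hd r by linarith
    finally show "cmod (ip (U m u) v - ip (P u) v) < r" .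
  qed
qed

end



lemma eps_zero: fixes X c :: real assumes c: "0 \<le> c" and H: "\<And>\<delta>. 0 < \<delta> \<Longrightarrow> X \<le> c * \<delta>" shows "X \<le> 0"
proof (rule field_le_epsilon)
  fix e :: real assume e: "0 < e"
  have d: "0 < e / (c + 1)" using e c by simp
  have "c * (e / (c + 1)) \<le> e"
  proof -
    have "c * (e / (c + 1)) = e * (c / (c + 1))" by simp
    also have "\<dots> \<le> e * 1" using e c by (intro mult_left_mono) auto
    finally show ?thesis by simp
  qed
  then show "X \<le> 0 + e" using H[OF d] by simp
qed

context ctx begin

lemma P_sa: "ip (P u) v = ip u (P v)"
proof -
  have ev: "eventually (\<lambda>m. cnj (ip (U m v) u) = ip (U m u) v) sequentially"
    unfolding eventually_sequentially
  proof (intro exI[of _ "Suc k"] allI impI)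
    fix m assume m: "Suc k \<le> m"
    have "ip (U m u) v = ip u (U m v)" by (rule U_sa[OF m])
    also have "\<dots> = cnj (ip (U m v) u)" by (rule ip_cnj_sym)
    finally show "cnj (ip (U m v) u) = ip (U m u) v" by simp
  qed
  have "(\<lambda>m. cnj (ip (U m v) u)) \<longlonglongrightarrow> cnj (ip (P v) u)" by (rule tendsto_cnj[OF weak_lim])
  then have "(\<lambda>m. ip (U m u) v) \<longlonglongrightarrow> cnj (ip (P v) u)" using tendsto_cong[OF ev] by blast
  then have "ip (P u) v = cnj (ip (P v) u)" using LIMSEQ_unique[OF weak_lim] by blast
  also have "\<dots> = ip u (P v)" by (rule ip_cnj_sym[symmetric])
  finally show ?thesis .
qed

lemma idem_D: assumes e: "e \<in> D" and f: "f \<in> D" shows "ip (P (P f)) e = ip (P f) e"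
proof -
  obtain n0 where n0: "n0 \<ge> Suc k" "\<forall>a\<ge>n0. \<forall>b\<ge>n0. ip (U a f) e = ip (U b f) e \<and> (a \<noteq> b \<longrightarrow> ip (U a (U b f)) e = ip (U a f) e)"
    using Phi_DD[OF f e] unfolding Phi_def by blast
  have step1: "ip (P f) (U a e) = ip (U a f) e" if a: "n0 \<le> a" for a
  proof -
    have ka: "Suc k \<le> a" using a n0 by simp
    have ev: "eventually (\<lambda>b. ip (U b f) (U a e) = ip (U a f) e) sequentially"
      unfolding eventually_sequentially
    proof (intro exI[of _ "max n0 (Suc a)"] allI impI)
      fix b assume b: "max n0 (Suc a) \<le> b"
      have "ip (U b f) (U a e) = ip (U a (U b f)) e" using U_sa[OF ka, of "U b f" e] by simp
      also have "\<dots> = ip (U a f) e" using n0(2)[rule_format, of a b] a b by simp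
      finally show "ip (U b f) (U a e) = ip (U a f) e" .
    qed
    have "(\<lambda>b. ip (U b f) (U a e)) \<longlonglongrightarrow> ip (U a f) e" using tendsto_eventually[OF ev] .
    then show ?thesis using LIMSEQ_unique[OF weak_lim[of f "U a e"]] by blast
  qed
  have ev: "eventually (\<lambda>a. ip (U a f) e = ip (U a (P f)) e) sequentially"
    unfolding eventually_sequentially
  proof (intro exI[of _ n0] allI impI)
    fix a assume a: "n0 \<le> a"
    have ka: "Suc k \<le> a" using a n0 by simp
    have "ip (U a (P f)) e = ip (P f) (U a e)" by (rule U_sa[OF ka])
    also have "\<dots> = ip (U a f) e" by (rule step1[OF a])
    finally show "ip (U a f) e = ip (U a (P f)) e" by simp
  qed
  have "(\<lambda>a. ip (U a (P f)) e) \<longlonglongrightarrow> ip (P f) e" using tendsto_cong[OF ev] weak_lim[of f e] by blast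
  then show ?thesis using LIMSEQ_unique[OF weak_lim[of "P f" e]] by blast
qed

definition T where "T w = P (P w) - P w"

lemma T_diff: "T (x - y) = T x - T y"
  by (simp add: T_def P_diff algebra_simps)

lemma hn_T: "hn (T w) \<le> 2 * hn w"
proof -
  have "hn (T w) \<le> hn (P (P w)) + hn (- P w)" unfolding T_def using hn_triangle[of "P (P w)" "- P w"] by simp
  also have "\<dots> \<le> hn w + hn w" using hn_P[of "P w"] hn_P[of w] hn_minus[of "P w"] by simp
  finally show ?thesis by simp
qed

lemma T_D: assumes e: "e \<in> D" and f: "f \<in> D" shows "ip (T f) e = 0"
  using idem_D[OF e f] by (simp add: T_def ip_diff_left)

lemma T_D1: assumes f: "f \<in> D" shows "ip (T f) v = 0"
proof -
  have "cmod (ip (T f) v) \<le> 0"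
  proof (rule eps_zero[OF hn_nonneg[of "T f"]])
    fix \<delta> :: real assume d: "0 < \<delta>"
    obtain e where e: "e \<in> D" "hn (v - e) < \<delta>" using dense_D[OF d] by blast
    have "ip (T f) v = ip (T f) (v - e)" using T_D[OF e(1) f] by (simp add: ip_diff_right)
    then have "cmod (ip (T f) v) \<le> hn (T f) * hn (v - e)" using cauchy_schwarz by simp
    also have "\<dots> \<le> hn (T f) * \<delta>" using e(2) hn_nonneg[of "T f"] by (intro mult_left_mono) auto
    finally show "cmod (ip (T f) v) \<le> hn (T f) * \<delta>" .
  qed
  then show ?thesis by simp
qed

lemma T_all: "ip (T u) v = 0"
proof -
  have "cmod (ip (T u) v) \<le> 0"
  proof (rule eps_zero[of "2 * hn v"])
    show "0 \<le> 2 * hn v" using hn_nonneg[of v] by simp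
    fix \<delta> :: real assume d: "0 < \<delta>"
    obtain f where f: "f \<in> D" "hn (u - f) < \<delta>" using dense_D[OF d] by blast
    have "ip (T u) v = ip (T (u - f)) v" using T_D1[OF f(1), of v] by (simp add: T_diff ip_diff_left)
    then have "cmod (ip (T u) v) \<le> hn (T (u - f)) * hn v" using cauchy_schwarz by simp
    also have "\<dots> \<le> (2 * hn (u - f)) * hn v" using hn_T[of "u - f"] hn_nonneg[of v] by (intro mult_right_mono) auto
    also have "\<dots> \<le> (2 * \<delta>) * hn v" using f(2) hn_nonneg[of v] by (intro mult_right_mono) auto
    finally show "cmod (ip (T u) v) \<le> 2 * hn v * \<delta>" by (simp add: mult_ac)
  qed
  then show ?thesis by simp
qed

lemma P_idem: "P (P u) = P u"
proof -
  have "ip (T u) (T u) = 0" by (rule T_all)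
  then have "T u = 0" by (rule ip_definite)
  then show ?thesis by (simp add: T_def)
qed

lemma P_linear: "Vector_Spaces.linear scl scl P"
  unfolding Vector_Spaces.linear_iff using vector_space_axioms P_add P_scale by blast

lemma result: "weak_op_limit ip (\<lambda>m. \<pi> (sA A m)) P \<and> orth_projection scl ip P"
  unfolding weak_op_limit_def orth_projection_def
  using weak_lim P_linear P_idem P_sa by (auto simp: fun_eq_iff)

end

theorem mainTheorem3:
  fixes chi :: "(cantor \<Rightarrow> cantor) \<Rightarrow> complex"
    and scl :: "complex \<Rightarrow> 'h::ab_group_add \<Rightarrow> 'h"
    and ip :: "'h \<Rightarrow> 'h \<Rightarrow> complex"
    and \<pi> :: "(cantor \<Rightarrow> cantor) \<Rightarrow> 'h \<Rightarrow> 'h"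
    and \<xi> :: 'h
    and A :: "cantor set"
  assumes "indecomposable_character chi"
    and "GNS_triple chi scl ip \<pi> \<xi>"
    and "nice A"
  shows "\<exists>P. weak_op_limit ip (\<lambda>m. \<pi> (sA A m)) P \<and> orth_projection scl ip P"
proof -
  have ch: "is_character chi" using assms(1) unfolding indecomposable_character_def by blast
  have tr: "\<And>g1 g2. g1 \<in> S2inf \<Longrightarrow> g2 \<in> S2inf \<Longrightarrow> chi (g1 \<circ> g2) = chi (g2 \<circ> g1)"
    using ch unfolding is_character_def by blast
  have hs: "complex_hilbert_space scl ip" and ur: "unitary_rep scl ip \<pi>"
    and cy: "cyclic_vector scl ip \<pi> \<xi>" and ce: "\<And>g. g \<in> S2inf \<Longrightarrow> chi g = ip (\<pi> g \<xi>) \<xi>"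
    using assms(2) unfolding GNS_triple_def by blast+
  obtain k where dk: "depk k A" using nice_depk[OF assms(3)] by blast
  interpret c: ctx scl ip \<pi> \<xi> chi A k
    by (rule ctx.intro[OF hs ctx_axioms.intro[OF ur cy ce tr dk]])
  show ?thesis using c.result by blast
qed

end
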